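(* In every execution of the protocol Fever, let $v$ be an initial view and let $\mathtt t$ be the first time at which any correct processor enters a view $\ge v$. Then: (i) some correct processor enters view $v$ at time $\mathtt t$; (ii) no correct processor enters any view $v'>v$ at time $\mathtt t$; (iii) $c(p)\le\mathtt c_v$ for every correct processor $p$ at time $\mathtt t$.
   Context: Model. There is a set $\Pi=\{p_0,\dots,p_{n-1}\}$ of $n$ processors, and $t$ is the largest integer $<n/3$. At most $t$ processors are Byzantine (arbitrary behaviour); the others are correct. Authenticated channels, unforgeable signatures and threshold signatures are assumed. Partial synchrony holds with a known $\Delta$ and an unknown $GST$. Each processor $p$ has a local clock $c(p)$. All clocks advance at the same rate as real time, except when the protocol forwards them. Partial initial clock synchronisation holds: for every correct $p$, at the start at least $t+1$ correct processors $p'$ satisfy $c(p')\ge c(p)-\Gamma$, for a known $\Gamma\ge2\Delta$. Underlying protocol. Views $v\in\mathbb N_{\ge0}$; a fixed integer $k\ge3$; $\mathtt{lead}(v)=p_i$ with $i=\lfloor v/k\rfloor\bmod n$; $v$ is initial iff $v\bmod k=0$. A quorum certificate (QC) for view $v$ is a threshold signature of $n-t$ distinct processors, and a correct processor contributes to a QC for view $v$ only while in view $v$. Protocol Fever. Set $\mathtt c_v=\Gamma v$. Each correct processor $p$ keeps a current view (initially $0$) and behaves as follows. (a) When $c(p)=\mathtt c_v$ for an initial view $v$, $p$ enters view $v$ and sends a $\mathtt{view}\ v$ message (the value $v$ signed by $p$) to $\mathtt{lead}(v)$. (b) Upon first seeing a QC for a view $v'$ at least its current view, $p$ enters view $v'+1$,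 and if $c(p)<\mathtt c_{v'+1}$ it sets $c(p):=\mathtt c_{v'+1}$. (c) Upon first seeing a view certificate (VC) for an initial view $v'$ greater than its current view, $p$ enters view $v'$, and if $c(p)<\mathtt c_{v'}$ it sets $c(p):=\mathtt c_{v'}$. (d) If $p=\mathtt{lead}(v')$ for some $v'$ at least its current view, then upon first receiving $\mathtt{view}\ v'$ messages from $t+1$ distinct processors, $p$ combines them into a threshold signature, the VC for view $v'$, and sends it to all processors (including itself). *)

theory Defs
  imports Complex_Main
begin

text \<open>
  Processors are the naturals below n (the set Pi).
\<close>

record params =
  nproc   :: nat
  kk      :: nat
  gam     :: real
  dlt     :: real
  gst     :: real         \<comment> \<open>GST (unknown to the processors)\<close>
  correct :: "nat set"

definition tmax :: "nat \<Rightarrow> nat" where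
  "tmax n = (GREATEST t. 3 * t < n)"

definition lead :: "nat \<Rightarrow> nat \<Rightarrow> nat \<Rightarrow> nat" where
  "lead n k v = (v div k) mod n"

definition initial :: "nat \<Rightarrow> nat \<Rightarrow> bool" where
  "initial k v \<longleftrightarrow> v mod k = 0"

definition cview :: "real \<Rightarrow> nat \<Rightarrow> real" where
  "cview G v = G * real v"

definition valid_params :: "params \<Rightarrow> bool" where
  "valid_params P \<longleftrightarrow>
     1 \<le> nproc P \<and> 3 \<le> kk P \<and>
     correct P \<subseteq> {..<nproc P} \<and>
     card ({..<nproc P} - correct P) \<le> tmax (nproc P) \<and>
     0 < dlt P \<and> 2 * dlt P \<le> gam P"

datatype payload =
    MView nat nat          \<comment> \<open>MView w q: the value w signed by q (a "view w" message)\<close>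
  | MVote nat nat          \<comment> \<open>MVote w q: q's signature share contributing to a QC for view w\<close>
  | MQC nat "nat set"      \<comment> \<open>MQC w S: QC for view w, threshold signature of the signers S\<close>
  | MVC nat "nat set"      \<comment> \<open>MVC w S: VC for view w, threshold signature of the signers S\<close>

record msg =
  src   :: nat
  dst   :: nat
  pay   :: payload
  stime :: real

record cfg =
  now     :: real
  clk     :: "nat \<Rightarrow> real"
  cur     :: "nat \<Rightarrow> nat"
  fired   :: "nat \<Rightarrow> nat set"              \<comment> \<open>initial views for which rule (a) has been executed\<close>
  seenQC  :: "nat \<Rightarrow> nat set"
  seenVC  :: "nat \<Rightarrow> nat set"
  qcs     :: "nat \<Rightarrow> (nat \<times> nat set) set"
  votes   :: "nat \<Rightarrow> nat \<Rightarrow> nat set"        \<comment> \<open>signers of QC shares for view w received by p\<close>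
  vrecv   :: "nat \<Rightarrow> nat \<Rightarrow> nat set"        \<comment> \<open>signers of view w messages received by p\<close>
  adv     :: "payload set"                 \<comment> \<open>payloads received by Byzantine processors\<close>
  transit :: "msg set"
  entered :: "(nat \<times> nat \<times> real) set"      \<comment> \<open>(p, w, tau): p entered view w at time tau\<close>

definition send :: "nat \<Rightarrow> nat \<Rightarrow> payload \<Rightarrow> cfg \<Rightarrow> cfg" where
  "send p q pl \<sigma> = \<sigma>\<lparr>transit := insert \<lparr>src = p, dst = q, pay = pl, stime = now \<sigma>\<rparr> (transit \<sigma>)\<rparr>"

definition enter :: "nat \<Rightarrow> nat \<Rightarrow> real \<Rightarrow> cfg \<Rightarrow> cfg" where
  "enter p w c \<sigma> = \<sigma>\<lparr>cur := (cur \<sigma>)(p := w), clk := (clk \<sigma>)(p := c),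
                      entered := insert (p, w, now \<sigma>) (entered \<sigma>)\<rparr>"

definition see_qc :: "params \<Rightarrow> nat \<Rightarrow> nat \<Rightarrow> nat set \<Rightarrow> cfg \<Rightarrow> cfg" where
  "see_qc P p w S \<sigma> =
    (let \<sigma>1 = \<sigma>\<lparr>qcs := (qcs \<sigma>)(p := insert (w, S) (qcs \<sigma> p))\<rparr> in
     if w \<in> seenQC \<sigma> p then \<sigma>1
     else (let \<sigma>2 = \<sigma>1\<lparr>seenQC := (seenQC \<sigma>)(p := insert w (seenQC \<sigma> p))\<rparr> in
           if cur \<sigma> p \<le> w
           then enter p (Suc w) (max (clk \<sigma> p) (cview (gam P) (Suc w))) \<sigma>2
           else \<sigma>2))"

definition see_vc :: "params \<Rightarrow> nat \<Rightarrow> nat \<Rightarrow> cfg \<Rightarrow> cfg" where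
  "see_vc P p w \<sigma> =
    (if \<not> initial (kk P) w \<or> w \<in> seenVC \<sigma> p then \<sigma>
     else (let \<sigma>1 = \<sigma>\<lparr>seenVC := (seenVC \<sigma>)(p := insert w (seenVC \<sigma> p))\<rparr> in
           if cur \<sigma> p < w
           then enter p w (max (clk \<sigma> p) (cview (gam P) w)) \<sigma>1
           else \<sigma>1))"

definition recv_view :: "params \<Rightarrow> nat \<Rightarrow> nat \<Rightarrow> nat \<Rightarrow> cfg \<Rightarrow> cfg" where
  "recv_view P p w q \<sigma> =
    (let n = nproc P; R = vrecv \<sigma> p w; R' = insert q R;
         \<sigma>1 = \<sigma>\<lparr>vrecv := (vrecv \<sigma>)(p := (vrecv \<sigma> p)(w := R'))\<rparr> in
     if p = lead n (kk P) w \<and> cur \<sigma> p \<le> w \<and> card R < tmax n + 1 \<and> tmax n + 1 \<le> card R'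
     then \<sigma>1\<lparr>transit := transit \<sigma>1 \<union>
              {\<lparr>src = p, dst = q', pay = MVC w R', stime = now \<sigma>\<rparr> | q'. q' < n}\<rparr>
     else \<sigma>1)"

text \<open>Correct p receives a message with payload pl (signatures by non-processors are invalid).\<close>
definition recv :: "params \<Rightarrow> nat \<Rightarrow> payload \<Rightarrow> cfg \<Rightarrow> cfg" where
  "recv P p pl \<sigma> =
    (let n = nproc P in
     case pl of
       MView w q \<Rightarrow> if q < n then recv_view P p w q \<sigma> else \<sigma>
     | MVote w q \<Rightarrow> if q < n then \<sigma>\<lparr>votes := (votes \<sigma>)(p := (votes \<sigma> p)(w := insert q (votes \<sigma> p w)))\<rparr>
                    else \<sigma>
     | MQC w S \<Rightarrow> if S \<subseteq> {..<n} \<and> n - tmax n \<le> card S then see_qc P p w S \<sigma> else \<sigma>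
     | MVC w S \<Rightarrow> if S \<subseteq> {..<n} \<and> tmax n + 1 \<le> card S then see_vc P p w \<sigma> else \<sigma>)"

text \<open>Payloads the Byzantine processors are able to produce (unforgeable signatures):
  they need every signature of a correct processor they use.\<close>
definition forgeable :: "params \<Rightarrow> cfg \<Rightarrow> payload \<Rightarrow> bool" where
  "forgeable P \<sigma> pl =
    (case pl of
       MView w q \<Rightarrow> q \<notin> correct P \<or> pl \<in> adv \<sigma>
     | MVote w q \<Rightarrow> q \<notin> correct P \<or> pl \<in> adv \<sigma>
     | MQC w S \<Rightarrow> pl \<in> adv \<sigma> \<or> (\<forall>q \<in> S \<inter> correct P. MVote w q \<in> adv \<sigma>)
     | MVC w S \<Rightarrow> pl \<in> adv \<sigma> \<or> (\<forall>q \<in> S \<inter> correct P. MView w q \<in> adv \<sigma>))"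

inductive step :: "params \<Rightarrow> cfg \<Rightarrow> cfg \<Rightarrow> bool" for P where
  \<comment> \<open>time passes; clocks advance at the rate of real time; no clock may pass an initial-view
      time c_w without rule (a) being executed; partial synchrony bounds message delays\<close>
  tick: "\<lbrakk> 0 < d;
          \<forall>p\<in>correct P. \<forall>w. initial (kk P) w \<longrightarrow>
             \<not> (clk \<sigma> p < cview (gam P) w \<and> cview (gam P) w < clk \<sigma> p + d);
          \<forall>p\<in>correct P. \<forall>w. initial (kk P) w \<and> clk \<sigma> p = cview (gam P) w \<longrightarrow> w \<in> fired \<sigma> p;
          \<forall>m\<in>transit \<sigma>. now \<sigma> + d \<le> max (gst P) (stime m) + dlt P \<rbrakk>
        \<Longrightarrow> step P \<sigma> (\<sigma>\<lparr>now := now \<sigma> + d, clk := (\<lambda>p. clk \<sigma> p + d)\<rparr>)"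
| clock: "\<lbrakk> p \<in> correct P; initial (kk P) w; clk \<sigma> p = cview (gam P) w; w \<notin> fired \<sigma> p \<rbrakk>
        \<Longrightarrow> step P \<sigma> (send p (lead (nproc P) (kk P) w) (MView w p)
                      (enter p w (clk \<sigma> p) (\<sigma>\<lparr>fired := (fired \<sigma>)(p := insert w (fired \<sigma> p))\<rparr>)))"
| deliver: "\<lbrakk> m \<in> transit \<sigma>; stime m < now \<sigma> \<rbrakk>
        \<Longrightarrow> step P \<sigma> (if dst m \<in> correct P
                      then recv P (dst m) (pay m) (\<sigma>\<lparr>transit := transit \<sigma> - {m}\<rparr>)
                      else \<sigma>\<lparr>transit := transit \<sigma> - {m}, adv := insert (pay m) (adv \<sigma>)\<rparr>)"
  \<comment> \<open>underlying protocol: a correct processor contributes to a QC only for its current view\<close>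
| vote: "\<lbrakk> p \<in> correct P; q < nproc P \<rbrakk>
        \<Longrightarrow> step P \<sigma> (send p q (MVote (cur \<sigma> p) p) \<sigma>)"
| relay: "\<lbrakk> p \<in> correct P; (w, S) \<in> qcs \<sigma> p; q < nproc P \<rbrakk>
        \<Longrightarrow> step P \<sigma> (send p q (MQC w S) \<sigma>)"
| combine: "\<lbrakk> p \<in> correct P; S \<subseteq> votes \<sigma> p w; nproc P - tmax (nproc P) \<le> card S \<rbrakk>
        \<Longrightarrow> step P \<sigma> (see_qc P p w S \<sigma>)"
| byz: "\<lbrakk> b < nproc P; b \<notin> correct P; q < nproc P; forgeable P \<sigma> pl \<rbrakk>
        \<Longrightarrow> step P \<sigma> (send b q pl \<sigma>)"

text \<open>Initial configuration: time 0, every correct processor is in (has entered) view 0, clocks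
  are at most c_0 = 0 and satisfy partial initial clock synchronisation.\<close>
definition init_cfg :: "params \<Rightarrow> cfg \<Rightarrow> bool" where
  "init_cfg P \<sigma> \<longleftrightarrow>
     now \<sigma> = 0 \<and>
     (\<forall>p\<in>correct P. clk \<sigma> p \<le> 0 \<and>
        tmax (nproc P) + 1 \<le> card {p' \<in> correct P. clk \<sigma> p - gam P \<le> clk \<sigma> p'}) \<and>
     cur \<sigma> = (\<lambda>_. 0) \<and> fired \<sigma> = (\<lambda>_. {}) \<and> seenQC \<sigma> = (\<lambda>_. {}) \<and> seenVC \<sigma> = (\<lambda>_. {}) \<and>
     qcs \<sigma> = (\<lambda>_. {}) \<and> votes \<sigma> = (\<lambda>_ _. {}) \<and> vrecv \<sigma> = (\<lambda>_ _. {}) \<and>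
     adv \<sigma> = {} \<and> transit \<sigma> = {} \<and>
     entered \<sigma> = {(p, 0, 0) | p. p \<in> correct P}"

definition fever_exec :: "params \<Rightarrow> (nat \<Rightarrow> cfg) \<Rightarrow> nat \<Rightarrow> bool" where
  "fever_exec P \<sigma> m \<longleftrightarrow>
     valid_params P \<and> init_cfg P (\<sigma> 0) \<and> (\<forall>i<m. step P (\<sigma> i) (\<sigma> (Suc i)))"

end

theory Submission
  imports Defs
begin

definition el :: "cfg \<Rightarrow> nat \<Rightarrow> nat \<Rightarrow> real \<Rightarrow> bool" where
  "el \<sigma> q w T \<longleftrightarrow> (\<exists>\<tau>. \<tau> < T \<and> (q,w,\<tau>) \<in> entered \<sigma>)"
definition ele :: "cfg \<Rightarrow> nat \<Rightarrow> nat \<Rightarrow> real \<Rightarrow> bool" where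
  "ele \<sigma> q w T \<longleftrightarrow> (\<exists>\<tau>. \<tau> \<le> T \<and> (q,w,\<tau>) \<in> entered \<sigma>)"

lemma el_mono: "el \<sigma> q w T \<Longrightarrow> entered \<sigma> \<subseteq> entered \<sigma>' \<Longrightarrow> T \<le> T' \<Longrightarrow> el \<sigma>' q w T'"
  unfolding el_def by (meson less_le_trans subsetD)
lemma ele_mono: "ele \<sigma> q w T \<Longrightarrow> entered \<sigma> \<subseteq> entered \<sigma>' \<Longrightarrow> T \<le> T' \<Longrightarrow> ele \<sigma>' q w T'"
  unfolding ele_def by (meson order_trans subsetD)
lemma ele_el: "ele \<sigma> q w T \<Longrightarrow> T < T' \<Longrightarrow> el \<sigma> q w T'"
  unfolding el_def ele_def by (meson le_less_trans)
lemma el_ele: "el \<sigma> q w T \<Longrightarrow> ele \<sigma> q w T"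
  unfolding el_def ele_def by (meson less_imp_le)

definition goodA :: "params \<Rightarrow> cfg \<Rightarrow> payload \<Rightarrow> real \<Rightarrow> bool" where
  "goodA P \<sigma> pl T = (case pl of
     MView w q \<Rightarrow> (q \<in> correct P \<longrightarrow> el \<sigma> q w T)
   | MVote w q \<Rightarrow> (q \<in> correct P \<longrightarrow> el \<sigma> q w T)
   | MQC w S \<Rightarrow> (\<forall>q\<in>S \<inter> correct P. el \<sigma> q w T)
   | MVC w S \<Rightarrow> (\<forall>q\<in>S \<inter> correct P. el \<sigma> q w T))"

definition goodT :: "params \<Rightarrow> cfg \<Rightarrow> payload \<Rightarrow> real \<Rightarrow> bool" where
  "goodT P \<sigma> pl T = (case pl of
     MView w q \<Rightarrow> (q \<in> correct P \<longrightarrow> ele \<sigma> q w T)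
   | MVote w q \<Rightarrow> (q \<in> correct P \<longrightarrow> ele \<sigma> q w T)
   | MQC w S \<Rightarrow> (\<forall>q\<in>S \<inter> correct P. el \<sigma> q w T)
   | MVC w S \<Rightarrow> (\<forall>q\<in>S \<inter> correct P. el \<sigma> q w T))"

lemma goodA_mono: "goodA P \<sigma> pl T \<Longrightarrow> entered \<sigma> \<subseteq> entered \<sigma>' \<Longrightarrow> T \<le> T' \<Longrightarrow> goodA P \<sigma>' pl T'"
  unfolding goodA_def by (cases pl) (auto intro: el_mono)
lemma goodT_mono: "goodT P \<sigma> pl T \<Longrightarrow> entered \<sigma> \<subseteq> entered \<sigma>' \<Longrightarrow> T \<le> T' \<Longrightarrow> goodT P \<sigma>' pl T'"
  unfolding goodT_def by (cases pl) (auto intro: el_mono ele_mono)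
lemma goodT_A: "goodT P \<sigma> pl T \<Longrightarrow> T < T' \<Longrightarrow> goodA P \<sigma> pl T'"
  unfolding goodT_def goodA_def by (cases pl) (auto intro: el_mono ele_el)
lemma goodA_T: "goodA P \<sigma> pl T \<Longrightarrow> goodT P \<sigma> pl T"
  unfolding goodT_def goodA_def by (cases pl) (auto intro: el_ele)

definition Inv :: "params \<Rightarrow> nat \<Rightarrow> cfg \<Rightarrow> bool" where
 "Inv P v \<sigma> \<longleftrightarrow>
  (\<forall>p\<in>correct P. ele \<sigma> p (cur \<sigma> p) (now \<sigma>)) \<and>
  (\<forall>p\<in>correct P. \<forall>w\<in>fired \<sigma> p. ele \<sigma> p w (now \<sigma>)) \<and>
  (\<forall>p\<in>correct P. \<forall>w. votes \<sigma> p w \<subseteq> {..<nproc P} \<and> (\<forall>q\<in>votes \<sigma> p w \<inter> correct P. el \<sigma> q w (now \<sigma>))) \<and>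
  (\<forall>p\<in>correct P. \<forall>w. vrecv \<sigma> p w \<subseteq> {..<nproc P} \<and> (\<forall>q\<in>vrecv \<sigma> p w \<inter> correct P. el \<sigma> q w (now \<sigma>))) \<and>
  (\<forall>p\<in>correct P. \<forall>w S. (w,S)\<in>qcs \<sigma> p \<longrightarrow> (\<forall>q\<in>S\<inter>correct P. el \<sigma> q w (now \<sigma>))) \<and>
  (\<forall>pl\<in>adv \<sigma>. goodA P \<sigma> pl (now \<sigma>)) \<and>
  (\<forall>m\<in>transit \<sigma>. stime m \<le> now \<sigma> \<and> goodT P \<sigma> (pay m) (stime m)) \<and>
  (\<forall>p\<in>correct P. cview (gam P) v < clk \<sigma> p \<longrightarrow>
      (\<exists>q\<in>correct P. \<exists>w\<ge>v. el \<sigma> q w (now \<sigma>)) \<or> (\<exists>w>v. ele \<sigma> p w (now \<sigma>))) \<and>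
  (\<forall>p w \<tau>. (p,w,\<tau>)\<in>entered \<sigma> \<longrightarrow> v < w \<longrightarrow> (\<exists>q\<in>correct P. \<exists>w'\<ge>v. el \<sigma> q w' \<tau>))"

lemma tmax_lt: "1 \<le> n \<Longrightarrow> 3 * tmax n < n"
  unfolding tmax_def
  by (rule GreatestI_nat[where k=0 and b=n]) auto

lemma some_correct:
  assumes vp: "valid_params P" and S: "S \<subseteq> {..<nproc P}"
    and c: "tmax (nproc P) + 1 \<le> card S \<or> nproc P - tmax (nproc P) \<le> card S"
  shows "\<exists>q\<in>S. q \<in> correct P"
proof (rule ccontr)
  assume "\<not> ?thesis"
  then have "S \<subseteq> {..<nproc P} - correct P" using S by auto
  then have "card S \<le> card ({..<nproc P} - correct P)" by (intro card_mono) auto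
  also have "\<dots> \<le> tmax (nproc P)" using vp unfolding valid_params_def by auto
  finally have "card S \<le> tmax (nproc P)" .
  moreover have "3 * tmax (nproc P) < nproc P" using vp tmax_lt unfolding valid_params_def by auto
  ultimately show False using c by linarith
qed


lemma gam_pos: "valid_params P \<Longrightarrow> 0 < gam P"
  unfolding valid_params_def by auto

lemma cview_less: "valid_params P \<Longrightarrow> cview (gam P) v < cview (gam P) w \<Longrightarrow> v < w"
  using gam_pos[of P] unfolding cview_def by (auto simp: mult_less_cancel_left)

lemma Inv_init:
  assumes a: "valid_params P" and b0: "init_cfg P \<sigma>" shows "Inv P v \<sigma>"
proof -
  note b = b0[unfolded init_cfg_def]
  have c0: "0 \<le> cview (gam P) v" using gam_pos[OF a] unfolding cview_def by auto
  show ?thesis unfolding Inv_def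
  proof (intro conjI)
    show "\<forall>p\<in>correct P. ele \<sigma> p (cur \<sigma> p) (now \<sigma>)" using b by (auto simp: ele_def)
    show "\<forall>p\<in>correct P. cview (gam P) v < clk \<sigma> p \<longrightarrow>
        (\<exists>q\<in>correct P. \<exists>w\<ge>v. el \<sigma> q w (now \<sigma>)) \<or> (\<exists>w>v. ele \<sigma> p w (now \<sigma>))"
      using b c0 by force
  qed (use b in auto)
qed

lemma el_eq: "entered \<sigma>' = entered \<sigma> \<Longrightarrow> el \<sigma>' = el \<sigma>"
  by (intro ext) (simp add: el_def)
lemma ele_eq: "entered \<sigma>' = entered \<sigma> \<Longrightarrow> ele \<sigma>' = ele \<sigma>"
  by (intro ext) (simp add: ele_def)
lemma goodA_eq: assumes e: "entered \<sigma>' = entered \<sigma>" shows "goodA P \<sigma>' = goodA P \<sigma>"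
  by (intro ext) (simp add: goodA_def el_def e split: payload.split)
lemma goodT_eq: assumes e: "entered \<sigma>' = entered \<sigma>" shows "goodT P \<sigma>' = goodT P \<sigma>"
  by (intro ext) (simp add: goodT_def el_def ele_def e split: payload.split)

lemma InvD:
  assumes "Inv P v \<sigma>"
  shows "\<forall>p\<in>correct P. ele \<sigma> p (cur \<sigma> p) (now \<sigma>)"
  "\<forall>p\<in>correct P. \<forall>w\<in>fired \<sigma> p. ele \<sigma> p w (now \<sigma>)"
  "\<forall>p\<in>correct P. \<forall>w. votes \<sigma> p w \<subseteq> {..<nproc P} \<and> (\<forall>q\<in>votes \<sigma> p w \<inter> correct P. el \<sigma> q w (now \<sigma>))"
  "\<forall>p\<in>correct P. \<forall>w. vrecv \<sigma> p w \<subseteq> {..<nproc P} \<and> (\<forall>q\<in>vrecv \<sigma> p w \<inter> correct P. el \<sigma> q w (now \<sigma>))"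
  "\<forall>p\<in>correct P. \<forall>w S. (w,S)\<in>qcs \<sigma> p \<longrightarrow> (\<forall>q\<in>S\<inter>correct P. el \<sigma> q w (now \<sigma>))"
  "\<forall>pl\<in>adv \<sigma>. goodA P \<sigma> pl (now \<sigma>)"
  "\<forall>m\<in>transit \<sigma>. stime m \<le> now \<sigma> \<and> goodT P \<sigma> (pay m) (stime m)"
  "\<forall>p\<in>correct P. cview (gam P) v < clk \<sigma> p \<longrightarrow>
      (\<exists>q\<in>correct P. \<exists>w\<ge>v. el \<sigma> q w (now \<sigma>)) \<or> (\<exists>w>v. ele \<sigma> p w (now \<sigma>))"
  "\<forall>p w \<tau>. (p,w,\<tau>)\<in>entered \<sigma> \<longrightarrow> v < w \<longrightarrow> (\<exists>q\<in>correct P. \<exists>w'\<ge>v. el \<sigma> q w' \<tau>)"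
  using assms unfolding Inv_def apply - apply (elim conjE; assumption)+ done

lemma Inv_frame:
  assumes I: "Inv P v \<sigma>"
    and f: "entered \<sigma>' = entered \<sigma>" "now \<sigma>' = now \<sigma>" "cur \<sigma>' = cur \<sigma>" "clk \<sigma>' = clk \<sigma>"
           "fired \<sigma>' = fired \<sigma>" "qcs \<sigma>' = qcs \<sigma>"
    and vo: "\<forall>p\<in>correct P. \<forall>w. votes \<sigma>' p w \<subseteq> {..<nproc P} \<and> (\<forall>q\<in>votes \<sigma>' p w \<inter> correct P. el \<sigma> q w (now \<sigma>))"
    and vr: "\<forall>p\<in>correct P. \<forall>w. vrecv \<sigma>' p w \<subseteq> {..<nproc P} \<and> (\<forall>q\<in>vrecv \<sigma>' p w \<inter> correct P. el \<sigma> q w (now \<sigma>))"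
    and ad: "\<forall>pl\<in>adv \<sigma>'. pl \<in> adv \<sigma> \<or> goodA P \<sigma> pl (now \<sigma>)"
    and tr: "\<forall>m\<in>transit \<sigma>'. m \<in> transit \<sigma> \<or> (stime m \<le> now \<sigma> \<and> goodT P \<sigma> (pay m) (stime m))"
  shows "Inv P v \<sigma>'"
proof -
  note I' = I[unfolded Inv_def]
  note eqs = el_eq[OF f(1)] ele_eq[OF f(1)] goodA_eq[OF f(1)] goodT_eq[OF f(1)]
  show ?thesis unfolding Inv_def eqs f(1-6)
  proof (intro conjI)
    show "\<forall>pl\<in>adv \<sigma>'. goodA P \<sigma> pl (now \<sigma>)" using ad InvD(6)[OF I] by blast
    show "\<forall>m\<in>transit \<sigma>'. stime m \<le> now \<sigma> \<and> goodT P \<sigma> (pay m) (stime m)" using tr InvD(7)[OF I] by blast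
  qed (use InvD[OF I] vo vr in blast)+
qed

lemma Inv_send:
  assumes I: "Inv P v \<sigma>" and g: "goodT P \<sigma> pl (now \<sigma>)"
  shows "Inv P v (send p q pl \<sigma>)"
  by (rule Inv_frame[OF I]) (use I g in \<open>auto simp: send_def Inv_def\<close>)

lemma see_qc_fields:
  "now (see_qc P p w S \<sigma>) = now \<sigma>" "adv (see_qc P p w S \<sigma>) = adv \<sigma>"
  "transit (see_qc P p w S \<sigma>) = transit \<sigma>" "votes (see_qc P p w S \<sigma>) = votes \<sigma>"
  "vrecv (see_qc P p w S \<sigma>) = vrecv \<sigma>" "fired (see_qc P p w S \<sigma>) = fired \<sigma>"
  "qcs (see_qc P p w S \<sigma>) = (qcs \<sigma>)(p := insert (w,S) (qcs \<sigma> p))"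
  by (simp_all add: see_qc_def enter_def Let_def)

lemma see_qc_ent:
  "(entered (see_qc P p w S \<sigma>) = entered \<sigma> \<and> cur (see_qc P p w S \<sigma>) = cur \<sigma> \<and> clk (see_qc P p w S \<sigma>) = clk \<sigma>)
   \<or> (entered (see_qc P p w S \<sigma>) = insert (p, Suc w, now \<sigma>) (entered \<sigma>)
      \<and> cur (see_qc P p w S \<sigma>) = (cur \<sigma>)(p := Suc w)
      \<and> clk (see_qc P p w S \<sigma>) = (clk \<sigma>)(p := max (clk \<sigma> p) (cview (gam P) (Suc w))))"
  by (simp add: see_qc_def enter_def Let_def)

lemma see_vc_fields:
  "now (see_vc P p w \<sigma>) = now \<sigma>" "adv (see_vc P p w \<sigma>) = adv \<sigma>"
  "transit (see_vc P p w \<sigma>) = transit \<sigma>" "votes (see_vc P p w \<sigma>) = votes \<sigma>"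
  "vrecv (see_vc P p w \<sigma>) = vrecv \<sigma>" "fired (see_vc P p w \<sigma>) = fired \<sigma>"
  "qcs (see_vc P p w \<sigma>) = qcs \<sigma>"
  by (simp_all add: see_vc_def enter_def Let_def)

lemma see_vc_ent:
  "(entered (see_vc P p w \<sigma>) = entered \<sigma> \<and> cur (see_vc P p w \<sigma>) = cur \<sigma> \<and> clk (see_vc P p w \<sigma>) = clk \<sigma>)
   \<or> (entered (see_vc P p w \<sigma>) = insert (p, w, now \<sigma>) (entered \<sigma>)
      \<and> cur (see_vc P p w \<sigma>) = (cur \<sigma>)(p := w)
      \<and> clk (see_vc P p w \<sigma>) = (clk \<sigma>)(p := max (clk \<sigma> p) (cview (gam P) w)))"
  by (simp add: see_vc_def enter_def Let_def)

lemma Inv_change_gen: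
  assumes I: "Inv P v \<sigma>" and vp: "valid_params P"
    and f: "now \<sigma>' = now \<sigma>" "adv \<sigma>' = adv \<sigma>" "transit \<sigma>' = transit \<sigma>" "votes \<sigma>' = votes \<sigma>"
           "vrecv \<sigma>' = vrecv \<sigma>"
    and fi: "\<forall>p\<in>correct P. \<forall>w\<in>fired \<sigma>' p. w \<in> fired \<sigma> p \<or> ele \<sigma>' p w (now \<sigma>)"
    and q: "\<forall>p'\<in>correct P. \<forall>w S. (w,S)\<in>qcs \<sigma>' p' \<longrightarrow> (w,S) \<in> qcs \<sigma> p' \<or> (\<forall>q\<in>S\<inter>correct P. el \<sigma> q w (now \<sigma>))"
    and e: "(entered \<sigma>' = entered \<sigma> \<and> cur \<sigma>' = cur \<sigma> \<and> clk \<sigma>' = clk \<sigma>) \<or>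
            (\<exists>p w. entered \<sigma>' = insert (p,w,now \<sigma>) (entered \<sigma>) \<and> cur \<sigma>' = (cur \<sigma>)(p:=w)
               \<and> clk \<sigma>' = (clk \<sigma>)(p := max (clk \<sigma> p) (cview (gam P) w))
               \<and> (v < w \<longrightarrow> (\<exists>q\<in>correct P. \<exists>w'\<ge>v. el \<sigma> q w' (now \<sigma>))))"
  shows "Inv P v \<sigma>'"
proof -
  have sub: "entered \<sigma> \<subseteq> entered \<sigma>'" using e by auto
  have elm: "\<And>q w T. el \<sigma> q w T \<Longrightarrow> el \<sigma>' q w T" using sub el_mono by blast
  have elem: "\<And>q w T. ele \<sigma> q w T \<Longrightarrow> ele \<sigma>' q w T" using sub ele_mono by blast
  have gA: "\<And>pl T. goodA P \<sigma> pl T \<Longrightarrow> goodA P \<sigma>' pl T" using sub goodA_mono by blast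
  have gT: "\<And>pl T. goodT P \<sigma> pl T \<Longrightarrow> goodT P \<sigma>' pl T" using sub goodT_mono by blast
  note I' = I[unfolded Inv_def]
  show ?thesis
    unfolding Inv_def
  proof (intro conjI)
    show "\<forall>p\<in>correct P. ele \<sigma>' p (cur \<sigma>' p) (now \<sigma>')"
      using e I' elem f by (auto simp: ele_def)
    show "\<forall>p\<in>correct P. \<forall>w\<in>fired \<sigma>' p. ele \<sigma>' p w (now \<sigma>')" using InvD(2)[OF I] elem f fi by metis
    show "\<forall>p\<in>correct P. \<forall>w. votes \<sigma>' p w \<subseteq> {..<nproc P} \<and> (\<forall>q\<in>votes \<sigma>' p w \<inter> correct P. el \<sigma>' q w (now \<sigma>'))"
      using I' elm f by auto
    show "\<forall>p\<in>correct P. \<forall>w. vrecv \<sigma>' p w \<subseteq> {..<nproc P} \<and> (\<forall>q\<in>vrecv \<sigma>' p w \<inter> correct P. el \<sigma>' q w (now \<sigma>'))"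
      using I' elm f by auto
    show "\<forall>p\<in>correct P. \<forall>w S. (w,S)\<in>qcs \<sigma>' p \<longrightarrow> (\<forall>q\<in>S\<inter>correct P. el \<sigma>' q w (now \<sigma>'))"
      using I' elm f q by metis
    show "\<forall>pl\<in>adv \<sigma>'. goodA P \<sigma>' pl (now \<sigma>')" using I' gA f by auto
    show "\<forall>m\<in>transit \<sigma>'. stime m \<le> now \<sigma>' \<and> goodT P \<sigma>' (pay m) (stime m)" using I' gT f by auto
    show "\<forall>p\<in>correct P. cview (gam P) v < clk \<sigma>' p \<longrightarrow>
      (\<exists>q\<in>correct P. \<exists>w\<ge>v. el \<sigma>' q w (now \<sigma>')) \<or> (\<exists>w>v. ele \<sigma>' p w (now \<sigma>'))"
    proof (intro ballI impI)
      fix p assume p: "p \<in> correct P" and c: "cview (gam P) v < clk \<sigma>' p"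
      show "(\<exists>q\<in>correct P. \<exists>w\<ge>v. el \<sigma>' q w (now \<sigma>')) \<or> (\<exists>w>v. ele \<sigma>' p w (now \<sigma>'))"
        using e
      proof
        assume "entered \<sigma>' = entered \<sigma> \<and> cur \<sigma>' = cur \<sigma> \<and> clk \<sigma>' = clk \<sigma>"
        then show ?thesis using I' p c elm elem f by metis
      next
        assume "\<exists>p w. entered \<sigma>' = insert (p,w,now \<sigma>) (entered \<sigma>) \<and> cur \<sigma>' = (cur \<sigma>)(p:=w)
               \<and> clk \<sigma>' = (clk \<sigma>)(p := max (clk \<sigma> p) (cview (gam P) w))
               \<and> (v < w \<longrightarrow> (\<exists>q\<in>correct P. \<exists>w'\<ge>v. el \<sigma> q w' (now \<sigma>)))"
        then obtain p0 w0 where E: "entered \<sigma>' = insert (p0,w0,now \<sigma>) (entered \<sigma>)"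
          and C: "clk \<sigma>' = (clk \<sigma>)(p0 := max (clk \<sigma> p0) (cview (gam P) w0))" by blast
        show ?thesis
        proof (cases "p = p0 \<and> cview (gam P) v < cview (gam P) w0")
          case True
          then have "v < w0" using cview_less[OF vp] by blast
          moreover have "ele \<sigma>' p w0 (now \<sigma>')" using E True f unfolding ele_def by auto
          ultimately show ?thesis by blast
        next
          case False
          then have "cview (gam P) v < clk \<sigma> p" using c C by (auto split: if_splits)
          then show ?thesis using I' p elm elem f by metis
        qed
      qed
    qed
    show "\<forall>p w \<tau>. (p,w,\<tau>)\<in>entered \<sigma>' \<longrightarrow> v < w \<longrightarrow> (\<exists>q\<in>correct P. \<exists>w'\<ge>v. el \<sigma>' q w' \<tau>)"
    proof (intro allI impI)
      fix p w \<tau> assume pw: "(p,w,\<tau>)\<in>entered \<sigma>'" and vw: "v < w"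
      show "\<exists>q\<in>correct P. \<exists>w'\<ge>v. el \<sigma>' q w' \<tau>"
      proof (cases "(p,w,\<tau>) \<in> entered \<sigma>")
        case True
        then show ?thesis using I' vw elm by metis
      next
        case False
        then obtain p0 w0 where E: "entered \<sigma>' = insert (p0,w0,now \<sigma>) (entered \<sigma>)"
          and V: "v < w0 \<longrightarrow> (\<exists>q\<in>correct P. \<exists>w'\<ge>v. el \<sigma> q w' (now \<sigma>))"
          using e pw by auto
        then have "p = p0" "w = w0" "\<tau> = now \<sigma>" using pw False by auto
        then show ?thesis using V vw elm by metis
      qed
    qed
  qed
qed

lemma Inv_change:
  assumes I: "Inv P v \<sigma>" and vp: "valid_params P"
    and f: "now \<sigma>' = now \<sigma>" "adv \<sigma>' = adv \<sigma>" "transit \<sigma>' = transit \<sigma>" "votes \<sigma>' = votes \<sigma>"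
           "vrecv \<sigma>' = vrecv \<sigma>" "fired \<sigma>' = fired \<sigma>"
    and q: "\<forall>p'\<in>correct P. \<forall>w S. (w,S)\<in>qcs \<sigma>' p' \<longrightarrow> (w,S) \<in> qcs \<sigma> p' \<or> (\<forall>q\<in>S\<inter>correct P. el \<sigma> q w (now \<sigma>))"
    and e: "(entered \<sigma>' = entered \<sigma> \<and> cur \<sigma>' = cur \<sigma> \<and> clk \<sigma>' = clk \<sigma>) \<or>
            (\<exists>p w. entered \<sigma>' = insert (p,w,now \<sigma>) (entered \<sigma>) \<and> cur \<sigma>' = (cur \<sigma>)(p:=w)
               \<and> clk \<sigma>' = (clk \<sigma>)(p := max (clk \<sigma> p) (cview (gam P) w))
               \<and> (v < w \<longrightarrow> (\<exists>q\<in>correct P. \<exists>w'\<ge>v. el \<sigma> q w' (now \<sigma>))))"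
  shows "Inv P v \<sigma>'"
  by (rule Inv_change_gen[OF I vp f(1-5) _ q e]) (simp add: f(6))

lemma Inv_see_qc:
  assumes I: "Inv P v \<sigma>" and vp: "valid_params P" and S: "S \<subseteq> {..<nproc P}"
    and c: "nproc P - tmax (nproc P) \<le> card S" and g: "\<forall>q\<in>S\<inter>correct P. el \<sigma> q w (now \<sigma>)"
  shows "Inv P v (see_qc P p w S \<sigma>)"
proof (rule Inv_change[OF I vp see_qc_fields(1-6)])
  show "\<forall>p'\<in>correct P. \<forall>w' S'. (w',S')\<in>qcs (see_qc P p w S \<sigma>) p' \<longrightarrow> (w',S') \<in> qcs \<sigma> p' \<or> (\<forall>q\<in>S'\<inter>correct P. el \<sigma> q w' (now \<sigma>))"
    using g by (auto simp: see_qc_fields)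
  obtain q where q: "q \<in> S" "q \<in> correct P" using some_correct[OF vp S] c by blast
  have "v < Suc w \<longrightarrow> (\<exists>q\<in>correct P. \<exists>w'\<ge>v. el \<sigma> q w' (now \<sigma>))"
  proof
    assume "v < Suc w"
    then have vw: "v \<le> w" by simp
    have e: "el \<sigma> q w (now \<sigma>)" using q g by blast
    have "\<exists>w'\<ge>v. el \<sigma> q w' (now \<sigma>)" using vw e by (intro exI[of _ w]) simp
    then show "\<exists>q\<in>correct P. \<exists>w'\<ge>v. el \<sigma> q w' (now \<sigma>)" using q(2) by (rule bexI)
  qed
  note V = this
  show "(entered (see_qc P p w S \<sigma>) = entered \<sigma> \<and> cur (see_qc P p w S \<sigma>) = cur \<sigma> \<and> clk (see_qc P p w S \<sigma>) = clk \<sigma>) \<or>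
            (\<exists>p0 w0. entered (see_qc P p w S \<sigma>) = insert (p0,w0,now \<sigma>) (entered \<sigma>) \<and> cur (see_qc P p w S \<sigma>) = (cur \<sigma>)(p0:=w0)
               \<and> clk (see_qc P p w S \<sigma>) = (clk \<sigma>)(p0 := max (clk \<sigma> p0) (cview (gam P) w0))
               \<and> (v < w0 \<longrightarrow> (\<exists>q\<in>correct P. \<exists>w'\<ge>v. el \<sigma> q w' (now \<sigma>))))"
    (is "?A \<or> ?B")
  proof (rule disjE[OF see_qc_ent[of P p w S \<sigma>]])
    assume "?A" then show ?thesis by (rule disjI1)
  next
    assume B: "entered (see_qc P p w S \<sigma>) = insert (p, Suc w, now \<sigma>) (entered \<sigma>)
      \<and> cur (see_qc P p w S \<sigma>) = (cur \<sigma>)(p := Suc w)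
      \<and> clk (see_qc P p w S \<sigma>) = (clk \<sigma>)(p := max (clk \<sigma> p) (cview (gam P) (Suc w)))"
    show ?thesis
      apply (rule disjI2)
      apply (rule exI[of _ p])
      apply (rule exI[of _ "Suc w"])
      using B V by simp
  qed
qed

lemma Inv_see_vc:
  assumes I: "Inv P v \<sigma>" and vp: "valid_params P" and S: "S \<subseteq> {..<nproc P}"
    and c: "tmax (nproc P) + 1 \<le> card S" and g: "\<forall>q\<in>S\<inter>correct P. el \<sigma> q w (now \<sigma>)"
  shows "Inv P v (see_vc P p w \<sigma>)"
proof (rule Inv_change[OF I vp see_vc_fields(1-6)])
  show "\<forall>p'\<in>correct P. \<forall>w' S'. (w',S')\<in>qcs (see_vc P p w \<sigma>) p' \<longrightarrow> (w',S') \<in> qcs \<sigma> p' \<or> (\<forall>q\<in>S'\<inter>correct P. el \<sigma> q w' (now \<sigma>))"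
    by (auto simp: see_vc_fields)
  obtain q where q: "q \<in> S" "q \<in> correct P" using some_correct[OF vp S] c by blast
  have "v < w \<longrightarrow> (\<exists>q\<in>correct P. \<exists>w'\<ge>v. el \<sigma> q w' (now \<sigma>))"
  proof
    assume "v < w"
    then have vw: "v \<le> w" by simp
    have e: "el \<sigma> q w (now \<sigma>)" using q g by blast
    have "\<exists>w'\<ge>v. el \<sigma> q w' (now \<sigma>)" using vw e by (intro exI[of _ w]) simp
    then show "\<exists>q\<in>correct P. \<exists>w'\<ge>v. el \<sigma> q w' (now \<sigma>)" using q(2) by (rule bexI)
  qed
  note V = this
  show "(entered (see_vc P p w \<sigma>) = entered \<sigma> \<and> cur (see_vc P p w \<sigma>) = cur \<sigma> \<and> clk (see_vc P p w \<sigma>) = clk \<sigma>) \<or>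
            (\<exists>p0 w0. entered (see_vc P p w \<sigma>) = insert (p0,w0,now \<sigma>) (entered \<sigma>) \<and> cur (see_vc P p w \<sigma>) = (cur \<sigma>)(p0:=w0)
               \<and> clk (see_vc P p w \<sigma>) = (clk \<sigma>)(p0 := max (clk \<sigma> p0) (cview (gam P) w0))
               \<and> (v < w0 \<longrightarrow> (\<exists>q\<in>correct P. \<exists>w'\<ge>v. el \<sigma> q w' (now \<sigma>))))"
    (is "?A \<or> ?B")
  proof (rule disjE[OF see_vc_ent[of P p w \<sigma>]])
    assume "?A" then show ?thesis by (rule disjI1)
  next
    assume B: "entered (see_vc P p w \<sigma>) = insert (p, w, now \<sigma>) (entered \<sigma>)
      \<and> cur (see_vc P p w \<sigma>) = (cur \<sigma>)(p := w)
      \<and> clk (see_vc P p w \<sigma>) = (clk \<sigma>)(p := max (clk \<sigma> p) (cview (gam P) (w)))"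
    show ?thesis
      apply (rule disjI2)
      apply (rule exI[of _ p])
      apply (rule exI[of _ "w"])
      using B V by simp
  qed
qed

lemma Inv_remove:
  assumes I: "Inv P v \<sigma>"
  shows "Inv P v (\<sigma>\<lparr>transit := transit \<sigma> - {m}\<rparr>)"
  by (rule Inv_frame[OF I]) (use I in \<open>auto simp: Inv_def\<close>)

lemma recv_view_disj:
  "recv_view P p w q \<sigma> = \<sigma>\<lparr>vrecv := (vrecv \<sigma>)(p := (vrecv \<sigma> p)(w := insert q (vrecv \<sigma> p w)))\<rparr>
   \<or> recv_view P p w q \<sigma> = \<sigma>\<lparr>vrecv := (vrecv \<sigma>)(p := (vrecv \<sigma> p)(w := insert q (vrecv \<sigma> p w))),
        transit := transit \<sigma> \<union> {\<lparr>src = p, dst = q', pay = MVC w (insert q (vrecv \<sigma> p w)), stime = now \<sigma>\<rparr> | q'. q' < nproc P}\<rparr>"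
  unfolding recv_view_def Let_def by simp

lemma Inv_recv_view:
  assumes I: "Inv P v \<sigma>" and p: "p \<in> correct P" and q: "q < nproc P"
    and g: "q \<in> correct P \<longrightarrow> el \<sigma> q w (now \<sigma>)"
  shows "Inv P v (recv_view P p w q \<sigma>)"
proof -
  let ?R' = "insert q (vrecv \<sigma> p w)"
  let ?s1 = "\<sigma>\<lparr>vrecv := (vrecv \<sigma>)(p := (vrecv \<sigma> p)(w := ?R'))\<rparr>"
  let ?M = "{\<lparr>src = p, dst = q', pay = MVC w ?R', stime = now \<sigma>\<rparr> | q'. q' < nproc P}"
  note I' = I[unfolded Inv_def]
  have R: "\<forall>x\<in>?R' \<inter> correct P. el \<sigma> x w (now \<sigma>)" using InvD(4)[OF I] p g by auto
  have vr: "\<forall>p'\<in>correct P. \<forall>w'. vrecv ?s1 p' w' \<subseteq> {..<nproc P} \<and> (\<forall>x\<in>vrecv ?s1 p' w' \<inter> correct P. el \<sigma> x w' (now \<sigma>))"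
  proof (intro ballI allI)
    fix p' w' assume p': "p' \<in> correct P"
    show "vrecv ?s1 p' w' \<subseteq> {..<nproc P} \<and> (\<forall>x\<in>vrecv ?s1 p' w' \<inter> correct P. el \<sigma> x w' (now \<sigma>))"
    proof (cases "p' = p \<and> w' = w")
      case True
      then show ?thesis using InvD(4)[OF I] p' q R by simp
    next
      case False
      then have "vrecv ?s1 p' w' = vrecv \<sigma> p' w'" by auto
      then show ?thesis using InvD(4)[OF I] p' by simp
    qed
  qed
  have s1: "Inv P v ?s1"
  proof (rule Inv_frame[OF I])
    show "\<forall>p\<in>correct P. \<forall>w. votes ?s1 p w \<subseteq> {..<nproc P} \<and> (\<forall>q\<in>votes ?s1 p w \<inter> correct P. el \<sigma> q w (now \<sigma>))"
      using InvD(3)[OF I] by simp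
  qed (use vr in simp_all)
  have s2: "Inv P v (?s1\<lparr>transit := transit \<sigma> \<union> ?M\<rparr>)"
  proof (rule Inv_frame[OF I])
    show "\<forall>p\<in>correct P. \<forall>w. votes (?s1\<lparr>transit := transit \<sigma> \<union> ?M\<rparr>) p w \<subseteq> {..<nproc P} \<and> (\<forall>q\<in>votes (?s1\<lparr>transit := transit \<sigma> \<union> ?M\<rparr>) p w \<inter> correct P. el \<sigma> q w (now \<sigma>))"
      using InvD(3)[OF I] by simp
    show "\<forall>m\<in>transit (?s1\<lparr>transit := transit \<sigma> \<union> ?M\<rparr>). m \<in> transit \<sigma> \<or> (stime m \<le> now \<sigma> \<and> goodT P \<sigma> (pay m) (stime m))"
    proof
      fix m assume "m \<in> transit (?s1\<lparr>transit := transit \<sigma> \<union> ?M\<rparr>)"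
      then have "m \<in> transit \<sigma> \<or> m \<in> ?M" by simp
      then show "m \<in> transit \<sigma> \<or> (stime m \<le> now \<sigma> \<and> goodT P \<sigma> (pay m) (stime m))"
      proof
        assume "m \<in> ?M"
        then obtain q' where "m = \<lparr>src = p, dst = q', pay = MVC w ?R', stime = now \<sigma>\<rparr>" by blast
        then show ?thesis using R by (simp add: goodT_def)
      qed simp
    qed
  qed (use vr in simp_all)
  from recv_view_disj[of P p w q \<sigma>] show ?thesis
  proof
    assume "recv_view P p w q \<sigma> = ?s1" then show ?thesis using s1 by simp
  next
    assume "recv_view P p w q \<sigma> = ?s1\<lparr>transit := transit \<sigma> \<union> ?M\<rparr>" then show ?thesis using s2 by simp
  qed
qed

lemma Inv_recv:
  assumes I: "Inv P v \<sigma>" and vp: "valid_params P" and p: "p \<in> correct P"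
    and g: "goodA P \<sigma> pl (now \<sigma>)"
  shows "Inv P v (recv P p pl \<sigma>)"
proof (cases pl)
  case (MView w q)
  then show ?thesis using I p g Inv_recv_view[OF I p, of q w]
    by (auto simp: recv_def goodA_def Let_def)
next
  case (MVote w q)
  note I' = I[unfolded Inv_def]
  let ?s = "\<sigma>\<lparr>votes := (votes \<sigma>)(p := (votes \<sigma> p)(w := insert q (votes \<sigma> p w)))\<rparr>"
  have R: "q \<in> correct P \<longrightarrow> el \<sigma> q w (now \<sigma>)" using g MVote by (simp add: goodA_def)
  have vo: "q < nproc P \<Longrightarrow> \<forall>p'\<in>correct P. \<forall>w'. votes ?s p' w' \<subseteq> {..<nproc P} \<and> (\<forall>x\<in>votes ?s p' w' \<inter> correct P. el \<sigma> x w' (now \<sigma>))"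
  proof (intro ballI allI)
    fix p' w' assume p': "p' \<in> correct P" and q: "q < nproc P"
    show "votes ?s p' w' \<subseteq> {..<nproc P} \<and> (\<forall>x\<in>votes ?s p' w' \<inter> correct P. el \<sigma> x w' (now \<sigma>))"
    proof (cases "p' = p \<and> w' = w")
      case True
      then show ?thesis using InvD(3)[OF I] p' q R by auto
    next
      case False
      then have "votes ?s p' w' = votes \<sigma> p' w'" by auto
      then show ?thesis using InvD(3)[OF I] p' by simp
    qed
  qed
  have "q < nproc P \<Longrightarrow> Inv P v ?s"
    by (rule Inv_frame[OF I]) (use vo InvD(4)[OF I] in simp_all)
  then show ?thesis using I MVote by (auto simp: recv_def Let_def)
next
  case (MQC w S)
  then show ?thesis using I g Inv_see_qc[OF I vp, of S w p]
    by (auto simp: recv_def goodA_def Let_def)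
next
  case (MVC w S)
  then show ?thesis using I g Inv_see_vc[OF I vp, of S w p]
    by (auto simp: recv_def goodA_def Let_def)
qed

lemma Inv_tick:
  assumes I: "Inv P v \<sigma>" and iv: "initial (kk P) v" and d: "0 < d"
    and c2: "\<forall>p\<in>correct P. \<forall>w. initial (kk P) w \<longrightarrow>
             \<not> (clk \<sigma> p < cview (gam P) w \<and> cview (gam P) w < clk \<sigma> p + d)"
    and c3: "\<forall>p\<in>correct P. \<forall>w. initial (kk P) w \<and> clk \<sigma> p = cview (gam P) w \<longrightarrow> w \<in> fired \<sigma> p"
    and c4: "\<forall>m\<in>transit \<sigma>. now \<sigma> + d \<le> max (gst P) (stime m) + dlt P"
  shows "Inv P v (\<sigma>\<lparr>now := now \<sigma> + d, clk := (\<lambda>p. clk \<sigma> p + d)\<rparr>)"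
proof -
  let ?s = "\<sigma>\<lparr>now := now \<sigma> + d, clk := (\<lambda>p. clk \<sigma> p + d)\<rparr>"
  have E: "entered ?s = entered \<sigma>" by simp
  note eqs = el_eq[OF E] ele_eq[OF E] goodA_eq[OF E] goodT_eq[OF E]
  have le: "now \<sigma> \<le> now \<sigma> + d" using d by simp
  have elm: "\<And>q w. el \<sigma> q w (now \<sigma>) \<Longrightarrow> el \<sigma> q w (now \<sigma> + d)"
    using el_mono le by blast
  have elem: "\<And>q w. ele \<sigma> q w (now \<sigma>) \<Longrightarrow> ele \<sigma> q w (now \<sigma> + d)"
    using ele_mono le by blast
  have gA: "\<And>pl. goodA P \<sigma> pl (now \<sigma>) \<Longrightarrow> goodA P \<sigma> pl (now \<sigma> + d)"
    using goodA_mono le by blast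
  show ?thesis unfolding Inv_def eqs
  proof (intro conjI)
    show "\<forall>p\<in>correct P. ele \<sigma> p (cur ?s p) (now ?s)" using InvD(1)[OF I] elem by simp
    show "\<forall>p\<in>correct P. \<forall>w\<in>fired ?s p. ele \<sigma> p w (now ?s)" using InvD(2)[OF I] elem by simp
    show "\<forall>p\<in>correct P. \<forall>w. votes ?s p w \<subseteq> {..<nproc P} \<and> (\<forall>q\<in>votes ?s p w \<inter> correct P. el \<sigma> q w (now ?s))"
      using InvD(3)[OF I] elm by simp
    show "\<forall>p\<in>correct P. \<forall>w. vrecv ?s p w \<subseteq> {..<nproc P} \<and> (\<forall>q\<in>vrecv ?s p w \<inter> correct P. el \<sigma> q w (now ?s))"
      using InvD(4)[OF I] elm by simp
    show "\<forall>p\<in>correct P. \<forall>w S. (w,S)\<in>qcs ?s p \<longrightarrow> (\<forall>q\<in>S\<inter>correct P. el \<sigma> q w (now ?s))"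
      using InvD(5)[OF I] elm by simp
    show "\<forall>pl\<in>adv ?s. goodA P \<sigma> pl (now ?s)" using InvD(6)[OF I] gA by simp
    show "\<forall>m\<in>transit ?s. stime m \<le> now ?s \<and> goodT P \<sigma> (pay m) (stime m)"
      using InvD(7)[OF I] le by force
    show "\<forall>p w \<tau>. (p,w,\<tau>)\<in>entered ?s \<longrightarrow> v < w \<longrightarrow> (\<exists>q\<in>correct P. \<exists>w'\<ge>v. el \<sigma> q w' \<tau>)"
      using InvD(9)[OF I] by simp
    show "\<forall>p\<in>correct P. cview (gam P) v < clk ?s p \<longrightarrow>
      (\<exists>q\<in>correct P. \<exists>w\<ge>v. el \<sigma> q w (now ?s)) \<or> (\<exists>w>v. ele \<sigma> p w (now ?s))"
    proof (intro ballI impI)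
      fix p assume p: "p \<in> correct P" and c: "cview (gam P) v < clk ?s p"
      show "(\<exists>q\<in>correct P. \<exists>w\<ge>v. el \<sigma> q w (now ?s)) \<or> (\<exists>w>v. ele \<sigma> p w (now ?s))"
      proof (cases "cview (gam P) v < clk \<sigma> p")
        case True
        then show ?thesis using InvD(8)[OF I] p elm elem by fastforce
      next
        case False
        have "clk \<sigma> p = cview (gam P) v" using False c c2 p iv by force
        then have "v \<in> fired \<sigma> p" using c3 p iv by blast
        then have "ele \<sigma> p v (now \<sigma>)" using InvD(2)[OF I] p by blast
        then have "el \<sigma> p v (now \<sigma> + d)" using ele_el d by simp
        then show ?thesis using p by auto
      qed
    qed
  qed
qed

lemma Inv_clock:
  assumes I: "Inv P v \<sigma>" and vp: "valid_params P"
    and p: "p \<in> correct P" and cw: "clk \<sigma> p = cview (gam P) w"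
  shows "Inv P v (send p L (MView w p)
                      (enter p w (clk \<sigma> p) (\<sigma>\<lparr>fired := (fired \<sigma>)(p := insert w (fired \<sigma> p))\<rparr>)))"
proof -
  let ?a = "enter p w (clk \<sigma> p) (\<sigma>\<lparr>fired := (fired \<sigma>)(p := insert w (fired \<sigma> p))\<rparr>)"
  have Jw: "v < w \<longrightarrow> (\<exists>q\<in>correct P. \<exists>w'\<ge>v. el \<sigma> q w' (now \<sigma>))"
  proof
    assume vw: "v < w"
    then have "cview (gam P) v < clk \<sigma> p" using cw gam_pos[OF vp] unfolding cview_def by simp
    then have "(\<exists>q\<in>correct P. \<exists>w\<ge>v. el \<sigma> q w (now \<sigma>)) \<or> (\<exists>w>v. ele \<sigma> p w (now \<sigma>))"
      using InvD(8)[OF I] p by blast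
    then show "\<exists>q\<in>correct P. \<exists>w'\<ge>v. el \<sigma> q w' (now \<sigma>)"
    proof
      assume "\<exists>w>v. ele \<sigma> p w (now \<sigma>)"
      then obtain w2 \<tau> where "v < w2" "\<tau> \<le> now \<sigma>" "(p,w2,\<tau>) \<in> entered \<sigma>" unfolding ele_def by blast
      then show ?thesis using InvD(9)[OF I] el_mono[of \<sigma> _ _ \<tau> \<sigma> "now \<sigma>"] by blast
    qed
  qed
  have Ia: "Inv P v ?a"
  proof (rule Inv_change_gen[OF I vp])
    show "\<forall>p'\<in>correct P. \<forall>w'\<in>fired ?a p'. w' \<in> fired \<sigma> p' \<or> ele ?a p' w' (now \<sigma>)"
      by (auto simp: enter_def ele_def)
    show "\<forall>p'\<in>correct P. \<forall>w S. (w,S)\<in>qcs ?a p' \<longrightarrow> (w,S) \<in> qcs \<sigma> p' \<or> (\<forall>q\<in>S\<inter>correct P. el \<sigma> q w (now \<sigma>))"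
      by (simp add: enter_def)
    have "entered ?a = insert (p,w,now \<sigma>) (entered \<sigma>) \<and> cur ?a = (cur \<sigma>)(p:=w)
               \<and> clk ?a = (clk \<sigma>)(p := max (clk \<sigma> p) (cview (gam P) w))"
      using cw by (simp add: enter_def)
    then show "(entered ?a = entered \<sigma> \<and> cur ?a = cur \<sigma> \<and> clk ?a = clk \<sigma>) \<or>
            (\<exists>p0 w0. entered ?a = insert (p0,w0,now \<sigma>) (entered \<sigma>) \<and> cur ?a = (cur \<sigma>)(p0:=w0)
               \<and> clk ?a = (clk \<sigma>)(p0 := max (clk \<sigma> p0) (cview (gam P) w0))
               \<and> (v < w0 \<longrightarrow> (\<exists>q\<in>correct P. \<exists>w'\<ge>v. el \<sigma> q w' (now \<sigma>))))"
      using Jw by blast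
  qed (simp_all add: enter_def)
  have g: "goodT P ?a (MView w p) (now ?a)"
    using p by (auto simp: goodT_def ele_def enter_def)
  show ?thesis by (rule Inv_send[OF Ia g])
qed

lemma Inv_step:
  assumes vp: "valid_params P" and iv: "initial (kk P) v" and I: "Inv P v \<sigma>"
    and st: "step P \<sigma> \<sigma>'"
  shows "Inv P v \<sigma>'"
  using st
proof cases
  case (tick d)
  then show ?thesis using Inv_tick[OF I iv] by blast
next
  case (clock p w)
  then show ?thesis using Inv_clock[OF I vp] by blast
next
  case (deliver m)
  let ?s0 = "\<sigma>\<lparr>transit := transit \<sigma> - {m}\<rparr>"
  have I0: "Inv P v ?s0" by (rule Inv_remove[OF I])
  have gt: "goodT P \<sigma> (pay m) (stime m)" using InvD(7)[OF I] deliver(2) by blast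
  have ga: "goodA P \<sigma> (pay m) (now \<sigma>)" by (rule goodT_A[OF gt deliver(3)])
  show ?thesis
  proof (cases "dst m \<in> correct P")
    case True
    have "goodA P ?s0 (pay m) (now ?s0)" using ga goodA_eq[of ?s0 \<sigma>] by simp
    then have "Inv P v (recv P (dst m) (pay m) ?s0)" by (rule Inv_recv[OF I0 vp True])
    then show ?thesis using deliver(1) True by simp
  next
    case False
    let ?s = "\<sigma>\<lparr>transit := transit \<sigma> - {m}, adv := insert (pay m) (adv \<sigma>)\<rparr>"
    have "Inv P v ?s"
      by (rule Inv_frame[OF I]) (use InvD(3,4)[OF I] ga in auto)
    then show ?thesis using deliver(1) False by simp
  qed
next
  case (vote p q)
  have "goodT P \<sigma> (MVote (cur \<sigma> p) p) (now \<sigma>)" using InvD(1)[OF I] vote(2) by (simp add: goodT_def)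
  then show ?thesis using vote(1) Inv_send[OF I] by blast
next
  case (relay p w S q)
  have "goodT P \<sigma> (MQC w S) (now \<sigma>)" using InvD(5)[OF I] relay(2,3) by (simp add: goodT_def)
  then show ?thesis using relay(1) Inv_send[OF I] by blast
next
  case (byz b q pl)
  have "goodT P \<sigma> pl (now \<sigma>)"
  proof (cases pl)
    case (MView w q')
    then have "q' \<notin> correct P \<or> pl \<in> adv \<sigma>" using byz(5) by (simp add: forgeable_def)
    then show ?thesis
    proof
      assume "pl \<in> adv \<sigma>" then show ?thesis using InvD(6)[OF I] goodA_T by blast
    qed (simp add: MView goodT_def)
  next
    case (MVote w q')
    then have "q' \<notin> correct P \<or> pl \<in> adv \<sigma>" using byz(5) by (simp add: forgeable_def)
    then show ?thesis
    proof
      assume "pl \<in> adv \<sigma>" then show ?thesis using InvD(6)[OF I] goodA_T by blast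
    qed (simp add: MVote goodT_def)
  next
    case (MQC w S)
    then show ?thesis using byz(5) InvD(6)[OF I]
      by (fastforce simp: forgeable_def goodT_def goodA_def)
  next
    case (MVC w S)
    then show ?thesis using byz(5) InvD(6)[OF I]
      by (fastforce simp: forgeable_def goodT_def goodA_def)
  qed
  then show ?thesis using byz(1) Inv_send[OF I] by blast
next
  case (combine p S w)
  have S: "S \<subseteq> {..<nproc P}" using InvD(3)[OF I] combine(2,3) by blast
  have g: "\<forall>q\<in>S\<inter>correct P. el \<sigma> q w (now \<sigma>)" using InvD(3)[OF I] combine(2,3) by blast
  show ?thesis using combine(1) Inv_see_qc[OF I vp S combine(4) g] by simp
qed

lemma see_qc_entered: "entered \<sigma> \<subseteq> entered (see_qc P p w S \<sigma>)"
  using see_qc_ent[of P p w S \<sigma>] by auto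
lemma see_vc_entered: "entered \<sigma> \<subseteq> entered (see_vc P p w \<sigma>)"
  using see_vc_ent[of P p w \<sigma>] by auto
lemma recv_view_entered: "entered \<sigma> \<subseteq> entered (recv_view P p w q \<sigma>)"
  using recv_view_disj[of P p w q \<sigma>] by auto

lemma recv_entered: "entered \<sigma> \<subseteq> entered (recv P p pl \<sigma>)"
  by (cases pl) (auto simp: recv_def Let_def dest: subsetD[OF see_qc_entered] subsetD[OF see_vc_entered]
       subsetD[OF recv_view_entered])

lemma step_entered: assumes "step P \<sigma> \<sigma>'" shows "entered \<sigma> \<subseteq> entered \<sigma>'"
  using assms
proof cases
  case (deliver m)
  have "entered \<sigma> \<subseteq> entered (recv P (dst m) (pay m) (\<sigma>\<lparr>transit := transit \<sigma> - {m}\<rparr>))"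
    using recv_entered[of "\<sigma>\<lparr>transit := transit \<sigma> - {m}\<rparr>"] by simp
  then show ?thesis using deliver by auto
next
  case (combine p S w)
  then show ?thesis using see_qc_entered by simp
qed (auto simp: send_def enter_def)

theorem lemma2:
  fixes P :: params and \<sigma> :: "nat \<Rightarrow> cfg" and m :: nat and v :: nat and t :: real
  assumes exec: "fever_exec P \<sigma> m"
    and init_v: "initial (kk P) v"
    and reached: "\<exists>p w. p \<in> correct P \<and> v \<le> w \<and> (p, w, t) \<in> entered (\<sigma> m)"
    and first: "\<forall>p w \<tau>. p \<in> correct P \<and> v \<le> w \<and> (p, w, \<tau>) \<in> entered (\<sigma> m) \<longrightarrow> t \<le> \<tau>"
  shows "(\<exists>p \<in> correct P. (p, v, t) \<in> entered (\<sigma> m))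
       \<and> (\<forall>p \<in> correct P. \<forall>w. v < w \<longrightarrow> (p, w, t) \<notin> entered (\<sigma> m))
       \<and> (\<forall>i \<le> m. \<forall>p \<in> correct P. now (\<sigma> i) = t \<longrightarrow> clk (\<sigma> i) p \<le> cview (gam P) v)"
proof -
  have vp: "valid_params P" and i0: "init_cfg P (\<sigma> 0)" and st: "\<And>i. i < m \<Longrightarrow> step P (\<sigma> i) (\<sigma> (Suc i))"
    using exec unfolding fever_exec_def by auto
  have inv: "i \<le> m \<Longrightarrow> Inv P v (\<sigma> i)" for i
  proof (induction i)
    case 0 show ?case by (rule Inv_init[OF vp i0])
  next
    case (Suc i)
    then show ?case using Inv_step[OF vp init_v _ st[of i]] by simp
  qed
  have mono: "i \<le> j \<Longrightarrow> j \<le> m \<Longrightarrow> entered (\<sigma> i) \<subseteq> entered (\<sigma> j)" for i j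
  proof (induction j)
    case 0 then show ?case by simp
  next
    case (Suc j)
    show ?case
    proof (cases "i = Suc j")
      case False
      then have "entered (\<sigma> i) \<subseteq> entered (\<sigma> j)" using Suc by simp
      also have "\<dots> \<subseteq> entered (\<sigma> (Suc j))" using step_entered[OF st[of j]] Suc by simp
      finally show ?thesis .
    qed simp
  qed
  have Im: "Inv P v (\<sigma> m)" using inv by simp
  note J = InvD(9)[OF Im]
  have noearly: "\<not> el (\<sigma> m) q w T" if "q \<in> correct P" "v \<le> w" "T \<le> t" for q w T
    using that first unfolding el_def by force
  have ii: "\<forall>p \<in> correct P. \<forall>w. v < w \<longrightarrow> (p, w, t) \<notin> entered (\<sigma> m)"
  proof (intro ballI allI impI notI)
    fix p w assume "p \<in> correct P" "v < w" "(p, w, t) \<in> entered (\<sigma> m)"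
    then obtain q w' where "q \<in> correct P" "v \<le> w'" "el (\<sigma> m) q w' t" using J by blast
    then show False using noearly by blast
  qed
  have i: "\<exists>p \<in> correct P. (p, v, t) \<in> entered (\<sigma> m)"
  proof -
    obtain p w where p: "p \<in> correct P" "v \<le> w" "(p, w, t) \<in> entered (\<sigma> m)" using reached by blast
    then have "w = v" using ii by (metis le_neq_implies_less)
    then show ?thesis using p by blast
  qed
  have iii: "\<forall>i \<le> m. \<forall>p \<in> correct P. now (\<sigma> i) = t \<longrightarrow> clk (\<sigma> i) p \<le> cview (gam P) v"
  proof (intro allI impI ballI)
    fix i p assume im: "i \<le> m" and p: "p \<in> correct P" and nt: "now (\<sigma> i) = t"
    show "clk (\<sigma> i) p \<le> cview (gam P) v"
    proof (rule ccontr)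
      assume "\<not> clk (\<sigma> i) p \<le> cview (gam P) v"
      then have "cview (gam P) v < clk (\<sigma> i) p" by simp
      then have D: "(\<exists>q\<in>correct P. \<exists>w\<ge>v. el (\<sigma> i) q w t) \<or> (\<exists>w>v. ele (\<sigma> i) p w t)"
        using InvD(8)[OF inv[OF im]] p nt by blast
      have sub: "entered (\<sigma> i) \<subseteq> entered (\<sigma> m)" using mono im by simp
      from D show False
      proof
        assume "\<exists>q\<in>correct P. \<exists>w\<ge>v. el (\<sigma> i) q w t"
        then obtain q w where "q \<in> correct P" "v \<le> w" "el (\<sigma> i) q w t" by blast
        then show False using noearly el_mono[OF _ sub, of q w t t] by auto
      next
        assume "\<exists>w>v. ele (\<sigma> i) p w t"
        then obtain w \<tau> where w: "v < w" "\<tau> \<le> t" "(p, w, \<tau>) \<in> entered (\<sigma> m)"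
          using sub unfolding ele_def by blast
        then obtain q w' where "q \<in> correct P" "v \<le> w'" "el (\<sigma> m) q w' \<tau>" using J by blast
        then show False using noearly w(2) by blast
      qed
    qed
  qed
  show ?thesis using i ii iii by blast
qed
end
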